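(* For every type theory $\mathcal T$ and $\mathcal R\in\{\equiv,=_\beta,=_{\beta\eta}\}$: if $B\vdash^{\mathcal T}_{\mathcal R}\Delta:\sigma$, then $\Delta$ is strongly normalizing with respect to $\to$, i.e. there is no infinite reduction sequence $\Delta\to\Delta_1\to\Delta_2\to\cdots$.
   Context: Type atoms: a set $\mathbb{A}$ of symbols; $\omega$ denotes a distinguished atom (the universal type). Intersection types over $\mathbb A$: $\sigma::= a\mid\sigma\to\sigma\mid\sigma\cap\sigma$ ($a\in\mathbb A$). An intersection type theory $\mathcal T$ over $\mathbb A$ is a set of inequalities $\sigma\le\tau$ (written $\sigma\le_{\mathcal T}\tau$) closed under (refl) $\sigma\le\sigma$; (incl) $\sigma\cap\tau\le\sigma$ and $\sigma\cap\tau\le\tau$; (glb) $\rho\le\sigma$ and $\rho\le\tau$ imply $\rho\le\sigma\cap\tau$; (trans) $\sigma\le\tau$ and $\tau\le\rho$ imply $\sigma\le\rho$. $\Delta$-terms: $\Delta::=u_\Delta\mid x\mid\lambda x{:}\sigma.\Delta\mid\Delta\,\Delta\mid\langle\Delta,\Delta\rangle\mid pr_1\Delta\mid pr_2\Delta\mid\Delta^\sigma$, where for every (not necessarily typable) $\Delta$-term $\Delta$ there is a constant $u_\Delta$. The essence $\|\Delta\|$ is the pure $\lambda$-term defined by $\|x\|=x$, $\|u_\Delta\|=\|\Delta\|$, $\|\Delta^\sigma\|=\|\Delta\|$, $\|\lambda x{:}\sigma.\Delta\|=\lambda x.\|\Delta\|$, $\|\Delta_1\Delta_2\|=\|\Delta_1\|\,\|\Delta_2\|$,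 $\|\langle\Delta_1,\Delta_2\rangle\|=\|\Delta_1\|$, $\|pr_i\Delta\|=\|\Delta\|$. Let $\mathcal R$ be one of $\equiv$ (syntactic identity up to $\alpha$), $=_\beta$, $=_{\beta\eta}$ on pure $\lambda$-terms. A basis $B$ is a finite set of declarations $x{:}\sigma$ with distinct variables. The typed system $\Delta^{\mathcal T}_{\mathcal R}$ derives $B\vdash^{\mathcal T}_{\mathcal R}\Delta:\sigma$ by: (top) $B\vdash u_\Delta:\omega$ if $\omega\in\mathbb A$; (ax) $B\vdash x:\sigma$ if $x{:}\sigma\in B$; ($\to$I) from $B,x{:}\sigma\vdash\Delta:\tau$ infer $B\vdash\lambda x{:}\sigma.\Delta:\sigma\to\tau$; ($\to$E) from $B\vdash\Delta_1:\sigma\to\tau$ and $B\vdash\Delta_2:\sigma$ infer $B\vdash\Delta_1\Delta_2:\tau$; ($\cap$I) from $B\vdash\Delta_1:\sigma$, $B\vdash\Delta_2:\tau$ and $\|\Delta_1\|\mathrel{\mathcal R}\|\Delta_2\|$ infer $B\vdash\langle\Delta_1,\Delta_2\rangle:\sigma\cap\tau$; ($\cap$E$_1$) from $B\vdash\Delta:\sigma\cap\tau$ infer $B\vdash pr_1\Delta:\sigma$; ($\cap$E$_2$) from $B\vdash\Delta:\sigma\cap\tau$ infer $B\vdash pr_2\Delta:\tau$; ($\le_{\mathcal T}$) from $B\vdash\Delta:\sigma$ and $\sigma\le_{\mathcal T}\tau$ infer $B\vdash\Delta^\tau:\tau$. Substitution $\Delta_1[\Delta_2/x]$ is capture-avoiding,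 with $u_{\Delta_1}[\Delta_2/x]=u_{\Delta_1[\Delta_2/x]}$ and $(\Delta_1^\sigma)[\Delta_2/x]=(\Delta_1[\Delta_2/x])^\sigma$. Notions of reduction: $(\beta)$ $(\lambda x{:}\sigma.\Delta_1)\Delta_2\to\Delta_1[\Delta_2/x]$; $(pr_i)$ $pr_i\langle\Delta_1,\Delta_2\rangle\to\Delta_i$ ($i=1,2$). ($(\lambda x{:}\sigma.\Delta_1)^\tau\Delta_2$ is not a redex.) $\to$ denotes the contextual closure of $(\beta)$ and $(pr_i)$, where no reduction is performed inside the index $\Delta$ of a constant $u_\Delta$. *)

theory Defs
  imports Main
begin

datatype 'a ity = Atom 'a | Arr "'a ity" "'a ity" | Inter "'a ity" "'a ity"

text \<open>An intersection type theory: a set of inequalities (sigma, tau), read sigma <= tau.\<close>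
definition type_theory :: "('a ity \<times> 'a ity) set \<Rightarrow> bool" where
  "type_theory T \<longleftrightarrow>
     (\<forall>s. (s, s) \<in> T) \<and>
     (\<forall>s t. (Inter s t, s) \<in> T \<and> (Inter s t, t) \<in> T) \<and>
     (\<forall>r s t. (r, s) \<in> T \<longrightarrow> (r, t) \<in> T \<longrightarrow> (r, Inter s t) \<in> T) \<and>
     (\<forall>s t r. (s, t) \<in> T \<longrightarrow> (t, r) \<in> T \<longrightarrow> (s, r) \<in> T)"

datatype lterm = LVar nat | LApp lterm lterm | LAbs lterm

primrec llift :: "lterm \<Rightarrow> nat \<Rightarrow> lterm" where
  "llift (LVar i) k = (if i < k then LVar i else LVar (Suc i))"
| "llift (LApp s t) k = LApp (llift s k) (llift t k)"
| "llift (LAbs s) k = LAbs (llift s (Suc k))"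

primrec lsubst :: "lterm \<Rightarrow> lterm \<Rightarrow> nat \<Rightarrow> lterm" where
  "lsubst (LVar i) s k = (if k < i then LVar (i - 1) else if i = k then s else LVar i)"
| "lsubst (LApp t u) s k = LApp (lsubst t s k) (lsubst u s k)"
| "lsubst (LAbs t) s k = LAbs (lsubst t (llift s 0) (Suc k))"

inductive lbeta :: "lterm \<Rightarrow> lterm \<Rightarrow> bool" where
  beta: "lbeta (LApp (LAbs s) t) (lsubst s t 0)"
| appL: "lbeta s t \<Longrightarrow> lbeta (LApp s u) (LApp t u)"
| appR: "lbeta s t \<Longrightarrow> lbeta (LApp u s) (LApp u t)"
| abs: "lbeta s t \<Longrightarrow> lbeta (LAbs s) (LAbs t)"

inductive leta :: "lterm \<Rightarrow> lterm \<Rightarrow> bool" where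
  eta: "leta (LAbs (LApp (llift s 0) (LVar 0))) s"
| appL: "leta s t \<Longrightarrow> leta (LApp s u) (LApp t u)"
| appR: "leta s t \<Longrightarrow> leta (LApp u s) (LApp u t)"
| abs: "leta s t \<Longrightarrow> leta (LAbs s) (LAbs t)"

text \<open>The three relations R on pure terms: syntactic identity (up to alpha, i.e. equality
  of de Bruijn terms), beta-conversion, beta-eta-conversion.\<close>
datatype rel = Syn | BetaConv | BetaEtaConv

fun relR :: "rel \<Rightarrow> lterm \<Rightarrow> lterm \<Rightarrow> bool" where
  "relR Syn = (=)"
| "relR BetaConv = equivclp lbeta"
| "relR BetaEtaConv = equivclp (sup lbeta leta)"

datatype 'a dterm =
    DU "'a dterm"                 \<comment> \<open>the constant u_Delta\<close>
  | DVar nat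
  | DLam "'a ity" "'a dterm"
  | DApp "'a dterm" "'a dterm"
  | DPair "'a dterm" "'a dterm"
  | DPr1 "'a dterm"
  | DPr2 "'a dterm"
  | DAnn "'a dterm" "'a ity"

primrec ess :: "'a dterm \<Rightarrow> lterm" where
  "ess (DU d) = ess d"
| "ess (DVar i) = LVar i"
| "ess (DLam s d) = LAbs (ess d)"
| "ess (DApp d e) = LApp (ess d) (ess e)"
| "ess (DPair d e) = ess d"
| "ess (DPr1 d) = ess d"
| "ess (DPr2 d) = ess d"
| "ess (DAnn d s) = ess d"

primrec dlift :: "'a dterm \<Rightarrow> nat \<Rightarrow> 'a dterm" where
  "dlift (DU d) k = DU (dlift d k)"
| "dlift (DVar i) k = (if i < k then DVar i else DVar (Suc i))"
| "dlift (DLam s d) k = DLam s (dlift d (Suc k))"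
| "dlift (DApp d e) k = DApp (dlift d k) (dlift e k)"
| "dlift (DPair d e) k = DPair (dlift d k) (dlift e k)"
| "dlift (DPr1 d) k = DPr1 (dlift d k)"
| "dlift (DPr2 d) k = DPr2 (dlift d k)"
| "dlift (DAnn d s) k = DAnn (dlift d k) s"

text \<open>Capture-avoiding substitution; it goes inside the index of constants u_Delta.\<close>
primrec dsubst :: "'a dterm \<Rightarrow> 'a dterm \<Rightarrow> nat \<Rightarrow> 'a dterm" where
  "dsubst (DU d) e k = DU (dsubst d e k)"
| "dsubst (DVar i) e k = (if k < i then DVar (i - 1) else if i = k then e else DVar i)"
| "dsubst (DLam s d) e k = DLam s (dsubst d (dlift e 0) (Suc k))"
| "dsubst (DApp d1 d2) e k = DApp (dsubst d1 e k) (dsubst d2 e k)"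
| "dsubst (DPair d1 d2) e k = DPair (dsubst d1 e k) (dsubst d2 e k)"
| "dsubst (DPr1 d) e k = DPr1 (dsubst d e k)"
| "dsubst (DPr2 d) e k = DPr2 (dsubst d e k)"
| "dsubst (DAnn d s) e k = DAnn (dsubst d e k) s"

text \<open>One-step reduction: contextual closure of beta and pr_i, never inside u_Delta.\<close>
inductive dred :: "'a dterm \<Rightarrow> 'a dterm \<Rightarrow> bool" where
  beta: "dred (DApp (DLam s d1) d2) (dsubst d1 d2 0)"
| pr1: "dred (DPr1 (DPair d1 d2)) d1"
| pr2: "dred (DPr2 (DPair d1 d2)) d2"
| lam: "dred d d' \<Longrightarrow> dred (DLam s d) (DLam s d')"
| appL: "dred d d' \<Longrightarrow> dred (DApp d e) (DApp d' e)"
| appR: "dred e e' \<Longrightarrow> dred (DApp d e) (DApp d e')"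
| pairL: "dred d d' \<Longrightarrow> dred (DPair d e) (DPair d' e)"
| pairR: "dred e e' \<Longrightarrow> dred (DPair d e) (DPair d e')"
| prj1: "dred d d' \<Longrightarrow> dred (DPr1 d) (DPr1 d')"
| prj2: "dred d d' \<Longrightarrow> dred (DPr2 d) (DPr2 d')"
| ann: "dred d d' \<Longrightarrow> dred (DAnn d s) (DAnn d' s)"

text \<open>omega = Some w means the distinguished atom w (omega) is in the atom set;
  omega = None means it is not. A basis is a de Bruijn context (list of types).\<close>
inductive has_type :: "'a option \<Rightarrow> ('a ity \<times> 'a ity) set \<Rightarrow> rel \<Rightarrow> 'a ity list
    \<Rightarrow> 'a dterm \<Rightarrow> 'a ity \<Rightarrow> bool" for omega T R where
  top: "omega = Some w \<Longrightarrow> has_type omega T R B (DU d) (Atom w)"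
| ax: "i < length B \<Longrightarrow> has_type omega T R B (DVar i) (B ! i)"
| arrI: "has_type omega T R (s # B) d t \<Longrightarrow> has_type omega T R B (DLam s d) (Arr s t)"
| arrE: "has_type omega T R B d1 (Arr s t) \<Longrightarrow> has_type omega T R B d2 s
          \<Longrightarrow> has_type omega T R B (DApp d1 d2) t"
| interI: "has_type omega T R B d1 s \<Longrightarrow> has_type omega T R B d2 t
          \<Longrightarrow> relR R (ess d1) (ess d2) \<Longrightarrow> has_type omega T R B (DPair d1 d2) (Inter s t)"
| interE1: "has_type omega T R B d (Inter s t) \<Longrightarrow> has_type omega T R B (DPr1 d) s"
| interE2: "has_type omega T R B d (Inter s t) \<Longrightarrow> has_type omega T R B (DPr2 d) t"
| sub: "has_type omega T R B d s \<Longrightarrow> (s, t) \<in> T \<Longrightarrow> has_type omega T R B (DAnn d t) t"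

end

theory Submission
  imports Defs
begin

lemma dsubst_Var: "dsubst (DVar i) s k = (if k < i then DVar (i - 1) else if i = k then s else DVar i)"
  by simp

declare dsubst.simps(2) [simp del]
declare if_not_P [simp] not_less_eq [simp]

lemma dsubst_eq [simp]: "dsubst (DVar k) u k = u"
  by (simp add: dsubst_Var)
lemma dsubst_gt [simp]: "i < j \<Longrightarrow> dsubst (DVar j) u i = DVar (j - 1)"
  by (simp add: dsubst_Var)
lemma dsubst_lt [simp]: "j < i \<Longrightarrow> dsubst (DVar j) u i = DVar j"
  by (simp add: dsubst_Var)

lemma dlift_lift:
    "i < k + 1 \<Longrightarrow> dlift (dlift t i) (Suc k) = dlift (dlift t k) i"
  by (induct t arbitrary: i k) auto

lemma dlift_subst [simp]:
    "j < i + 1 \<Longrightarrow> dlift (dsubst t s j) i = dsubst (dlift t (i + 1)) (dlift s i) j"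
  by (induct t arbitrary: i j s)
    (simp_all add: diff_Suc dsubst_Var dlift_lift split: nat.split)

lemma dlift_subst_lt:
    "i < j + 1 \<Longrightarrow> dlift (dsubst t s j) i = dsubst (dlift t i) (dlift s i) (j + 1)"
  by (induct t arbitrary: i j s) (simp_all add: dsubst_Var dlift_lift)

lemma dsubst_lift [simp]:
    "dsubst (dlift t k) s k = t"
  by (induct t arbitrary: k s) simp_all

lemma dsubst_subst:
    "i < j + 1 \<Longrightarrow> dsubst (dsubst t (dlift v i) (Suc j)) (dsubst u v j) i = dsubst (dsubst t u i) v j"
  by (induct t arbitrary: i j u v)
    (simp_all add: diff_Suc dsubst_Var dlift_lift [symmetric] dlift_subst_lt
      split: nat.split)

lemma dsubst_pres: "dred r s \<Longrightarrow> dred (dsubst r t i) (dsubst s t i)"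
  by (induct arbitrary: t i rule: dred.induct)
     (simp_all add: dsubst_subst [symmetric] dred.intros)

definition up :: "(nat \<Rightarrow> 'a dterm) \<Rightarrow> nat \<Rightarrow> 'a dterm" where
  "up \<theta> i = (case i of 0 \<Rightarrow> DVar 0 | Suc j \<Rightarrow> dlift (\<theta> j) 0)"

definition scons :: "'a dterm \<Rightarrow> (nat \<Rightarrow> 'a dterm) \<Rightarrow> nat \<Rightarrow> 'a dterm" where
  "scons e \<theta> i = (case i of 0 \<Rightarrow> e | Suc j \<Rightarrow> \<theta> j)"

primrec psubst :: "'a dterm \<Rightarrow> (nat \<Rightarrow> 'a dterm) \<Rightarrow> 'a dterm" where
  "psubst (DU d) \<theta> = DU (psubst d \<theta>)"
| "psubst (DVar i) \<theta> = \<theta> i"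
| "psubst (DLam s d) \<theta> = DLam s (psubst d (up \<theta>))"
| "psubst (DApp d e) \<theta> = DApp (psubst d \<theta>) (psubst e \<theta>)"
| "psubst (DPair d e) \<theta> = DPair (psubst d \<theta>) (psubst e \<theta>)"
| "psubst (DPr1 d) \<theta> = DPr1 (psubst d \<theta>)"
| "psubst (DPr2 d) \<theta> = DPr2 (psubst d \<theta>)"
| "psubst (DAnn d s) \<theta> = DAnn (psubst d \<theta>) s"

lemma up_DVar: "up DVar = DVar"
  by (rule ext) (simp add: up_def split: nat.split)

lemma psubst_id: "psubst d DVar = d"
  by (induct d) (simp_all add: up_DVar)

lemma dsubst_psubst: "dsubst (psubst d \<sigma>) e k = psubst d (\<lambda>i. dsubst (\<sigma> i) e k)"
proof (induct d arbitrary: \<sigma> e k)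
  case (DLam s d)
  have "(\<lambda>i. dsubst (up \<sigma> i) (dlift e 0) (Suc k)) = up (\<lambda>i. dsubst (\<sigma> i) e k)"
    by (rule ext) (simp add: up_def dlift_subst_lt split: nat.split)
  then show ?case using DLam by simp
qed simp_all

lemma dsubst_psubst_up: "dsubst (psubst d (up \<theta>)) e 0 = psubst d (scons e \<theta>)"
proof -
  have "(\<lambda>i. dsubst (up \<theta> i) e 0) = scons e \<theta>"
    by (rule ext) (simp add: up_def scons_def split: nat.split)
  then show ?thesis by (simp add: dsubst_psubst)
qed

abbreviation SN :: "'a dterm \<Rightarrow> bool" where
  "SN \<equiv> Wellfounded.accp (\<lambda>y x. dred x y)"

lemma SN_red: "SN d \<Longrightarrow> dred d d' \<Longrightarrow> SN d'"
  by (meson accp_downward)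

lemma SN_no_chain: "SN d \<Longrightarrow> \<not> (\<exists>f. f 0 = d \<and> (\<forall>i. dred (f i) (f (Suc i))))"
proof (induct rule: accp.induct)
  case (accI x)
  show ?case
  proof
    assume "\<exists>f. f 0 = x \<and> (\<forall>i. dred (f i) (f (Suc i)))"
    then obtain f where f: "f 0 = x" "\<forall>i. dred (f i) (f (Suc i))" by blast
    then have "dred x (f 1)" by (metis One_nat_def)
    with accI.hyps have "\<not> (\<exists>g. g 0 = f 1 \<and> (\<forall>i. dred (g i) (g (Suc i))))" by blast
    moreover have "\<exists>g. g 0 = f 1 \<and> (\<forall>i. dred (g i) (g (Suc i)))"
      using f by (intro exI[where x="\<lambda>i. f (Suc i)"]) simp
    ultimately show False by blast
  qed
qed

lemma SN_sub_gen: "SN x \<Longrightarrow> (\<And>d d'. dred d d' \<Longrightarrow> dred (h d) (h d')) \<Longrightarrow> x = h d \<Longrightarrow> SN d"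
proof (induct arbitrary: d rule: accp.induct)
  case (accI x)
  show ?case
  proof (rule accp.accI)
    fix y assume "dred d y"
    then have "dred x (h y)" using accI by simp
    then show "SN y" using accI by blast
  qed
qed

lemma SN_App: "SN (DApp d e) \<Longrightarrow> SN d"
  by (rule SN_sub_gen[where h="\<lambda>d. DApp d e"]) (auto intro: dred.intros)
lemma SN_Pr1: "SN (DPr1 d) \<Longrightarrow> SN d"
  by (rule SN_sub_gen[where h="\<lambda>d. DPr1 d"]) (auto intro: dred.intros)
lemma SN_subst: "SN (dsubst d e k) \<Longrightarrow> SN d"
  by (rule SN_sub_gen[where h="\<lambda>d. dsubst d e k"]) (auto intro: dsubst_pres)

inductive_cases dred_DU: "dred (DU d) x"
inductive_cases dred_DVar: "dred (DVar i) x"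
inductive_cases dred_DLam: "dred (DLam s d) x"
inductive_cases dred_DApp: "dred (DApp d e) x"
inductive_cases dred_DPair: "dred (DPair d e) x"
inductive_cases dred_DPr1: "dred (DPr1 d) x"
inductive_cases dred_DPr2: "dred (DPr2 d) x"
inductive_cases dred_DAnn: "dred (DAnn d s) x"

fun RED :: "'a ity \<Rightarrow> 'a dterm \<Rightarrow> bool" where
  "RED (Atom a) d = SN d"
| "RED (Arr s t) d = (\<forall>e. RED s e \<longrightarrow> RED t (DApp d e))"
| "RED (Inter s t) d = (RED s (DPr1 d) \<and> RED t (DPr2 d))"

definition neutral :: "'a dterm \<Rightarrow> bool" where
  "neutral d = (case d of DLam _ _ \<Rightarrow> False | DPair _ _ \<Rightarrow> False | _ \<Rightarrow> True)"

lemma CR: "(\<forall>d. RED \<tau> d \<longrightarrow> SN d) \<and> (\<forall>d d'. RED \<tau> d \<longrightarrow> dred d d' \<longrightarrow> RED \<tau> d')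
   \<and> (\<forall>d. neutral d \<longrightarrow> (\<forall>d'. dred d d' \<longrightarrow> RED \<tau> d') \<longrightarrow> RED \<tau> d)"
proof (induct \<tau>)
  case (Atom a)
  then show ?case by (auto intro: SN_red accp.accI)
next
  case (Arr s t)
  have var: "RED s (DVar 0)"
    by (rule Arr(1)[THEN conjunct2, THEN conjunct2, rule_format]) (auto simp: neutral_def elim: dred_DVar)
  have cr1: "\<forall>d. RED (Arr s t) d \<longrightarrow> SN d"
    using var Arr(2) by (auto intro: SN_App)
  have cr2: "\<forall>d d'. RED (Arr s t) d \<longrightarrow> dred d d' \<longrightarrow> RED (Arr s t) d'"
    using Arr(2) by (auto intro: dred.intros)
  have cr3: "RED (Arr s t) d" if n: "neutral d" and h: "\<forall>d'. dred d d' \<longrightarrow> RED (Arr s t) d'" for d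
  proof (simp, intro allI impI)
    fix e assume "RED s e"
    then have "SN e" using Arr(1) by blast
    then show "RED t (DApp d e)" using \<open>RED s e\<close>
    proof (induct rule: accp.induct)
      case (accI e)
      show ?case
      proof (rule Arr(2)[THEN conjunct2, THEN conjunct2, rule_format])
        show "neutral (DApp d e)" by (simp add: neutral_def)
        fix x assume "dred (DApp d e) x"
        then show "RED t x"
        proof (rule dred_DApp)
          fix s' d1 assume "d = DLam s' d1" then show ?thesis using n by (simp add: neutral_def)
        next
          fix d' assume "x = DApp d' e" "dred d d'" then show ?thesis using h accI by auto
        next
          fix e' assume "x = DApp d e'" "dred e e'" then show ?thesis using accI Arr(1) by blast
        qed
      qed
    qed
  qed
  show ?case using cr1 cr2 cr3 by blast
next
  case (Inter s t)
  have cr1: "\<forall>d. RED (Inter s t) d \<longrightarrow> SN d"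
    using Inter by (auto intro: SN_Pr1)
  have cr2: "\<forall>d d'. RED (Inter s t) d \<longrightarrow> dred d d' \<longrightarrow> RED (Inter s t) d'"
  proof (intro allI impI)
    fix d d' assume "RED (Inter s t) d" "dred d d'"
    then show "RED (Inter s t) d'" using Inter by simp (meson dred.prj1 dred.prj2)
  qed
  have cr3: "RED (Inter s t) d" if n: "neutral d" and h: "\<forall>d'. dred d d' \<longrightarrow> RED (Inter s t) d'" for d
  proof (simp, intro conjI)
    show "RED s (DPr1 d)"
    proof (rule Inter(1)[THEN conjunct2, THEN conjunct2, rule_format])
      show "neutral (DPr1 d)" by (simp add: neutral_def)
      fix x assume "dred (DPr1 d) x"
      then show "RED s x"
        by (cases rule: dred_DPr1) (use n h in \<open>auto simp: neutral_def\<close>)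
    qed
    show "RED t (DPr2 d)"
    proof (rule Inter(2)[THEN conjunct2, THEN conjunct2, rule_format])
      show "neutral (DPr2 d)" by (simp add: neutral_def)
      fix x assume "dred (DPr2 d) x"
      then show "RED t x"
        by (cases rule: dred_DPr2) (use n h in \<open>auto simp: neutral_def\<close>)
    qed
  qed
  show ?case using cr1 cr2 cr3 by blast
qed

lemma CR1: "RED \<tau> d \<Longrightarrow> SN d" using CR by blast
lemma CR2: "RED \<tau> d \<Longrightarrow> dred d d' \<Longrightarrow> RED \<tau> d'" using CR by blast
lemma CR3: "neutral d \<Longrightarrow> (\<And>d'. dred d d' \<Longrightarrow> RED \<tau> d') \<Longrightarrow> RED \<tau> d" using CR by blast

lemma RED_var: "RED \<tau> (DVar i)"
  by (rule CR3) (auto simp: neutral_def elim: dred_DVar)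

lemma RED_DU: "RED \<tau> (DU d)"
  by (rule CR3) (auto simp: neutral_def elim: dred_DU)

lemma RED_ann: "SN d \<Longrightarrow> RED \<tau> (DAnn d s)"
proof (induct rule: accp.induct)
  case (accI d)
  show ?case
    by (rule CR3) (use accI in \<open>auto simp: neutral_def elim: dred_DAnn\<close>)
qed

lemma RED_lam:
  assumes H: "\<forall>e. RED s e \<longrightarrow> RED t (dsubst b e 0)"
  shows "RED (Arr s t) (DLam s b)"
proof (simp, intro allI impI)
  fix e assume e: "RED s e"
  have "SN b" using H RED_var[of s 0] by (blast intro: SN_subst CR1)
  then show "RED t (DApp (DLam s b) e)" using H e
  proof (induct arbitrary: e rule: accp.induct)
    case (accI b)
    note outer_prems = accI.prems and outer_hyps = accI.hyps
    from accI.prems(2) have "SN e" by (rule CR1)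
    then show ?case using accI.prems(2)
    proof (induct rule: accp.induct)
      case (accI e)
      show ?case
      proof (rule CR3)
        show "neutral (DApp (DLam s b) e)" by (simp add: neutral_def)
        fix x assume "dred (DApp (DLam s b) e) x"
        then show "RED t x"
        proof (rule dred_DApp)
          fix s' d1 assume "DLam s b = DLam s' d1" "x = dsubst d1 e 0"
          then show ?thesis using accI.prems outer_prems(1) by auto
        next
          fix d' assume d': "x = DApp d' e" "dred (DLam s b) d'"
          then obtain b' where b': "d' = DLam s b'" "dred b b'" by (auto elim: dred_DLam)
          have "\<forall>e. RED s e \<longrightarrow> RED t (dsubst b' e 0)"
            using outer_prems(1) b'(2) by (blast intro: CR2 dsubst_pres)
          then show ?thesis using d' b' outer_hyps(2) accI.prems by blast
        next
          fix e' assume "x = DApp (DLam s b) e'" "dred e e'"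
          then show ?thesis using accI by (blast intro: CR2)
        qed
      qed
    qed
  qed
qed


lemma RED_pair: "RED s a \<Longrightarrow> RED t b \<Longrightarrow> RED (Inter s t) (DPair a b)"
proof -
  assume a: "RED s a" and b: "RED t b"
  have "SN a" using a by (rule CR1)
  then show ?thesis using a b
  proof (induct arbitrary: b rule: accp.induct)
    case (accI a)
    note outer_prems = accI.prems and outer_hyps = accI.hyps
    from accI.prems(2) have "SN b" by (rule CR1)
    then show ?case using accI.prems(2)
    proof (induct rule: accp.induct)
      case (accI b)
      show ?case
      proof (simp, intro conjI)
        show "RED s (DPr1 (DPair a b))"
        proof (rule CR3)
          show "neutral (DPr1 (DPair a b))" by (simp add: neutral_def)
          fix x assume "dred (DPr1 (DPair a b)) x"
          then show "RED s x"
          proof (rule dred_DPr1)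
            fix d2 assume "DPair a b = DPair x d2"
            then show ?thesis using outer_prems by simp
          next
            fix d' assume x: "x = DPr1 d'" "dred (DPair a b) d'"
            from x(2) show ?thesis
            proof (rule dred_DPair)
              fix a' assume "d' = DPair a' b" "dred a a'"
              then show ?thesis using x outer_hyps(2) outer_prems accI.prems CR2 by fastforce
            next
              fix b' assume "d' = DPair a b'" "dred b b'"
              then show ?thesis using x accI CR2 by fastforce
            qed
          qed
        qed
        show "RED t (DPr2 (DPair a b))"
        proof (rule CR3)
          show "neutral (DPr2 (DPair a b))" by (simp add: neutral_def)
          fix x assume "dred (DPr2 (DPair a b)) x"
          then show "RED t x"
          proof (rule dred_DPr2)
            fix d1 assume "DPair a b = DPair d1 x"
            then show ?thesis using accI.prems by simp
          next
            fix d' assume x: "x = DPr2 d'" "dred (DPair a b) d'"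
            from x(2) show ?thesis
            proof (rule dred_DPair)
              fix a' assume "d' = DPair a' b" "dred a a'"
              then show ?thesis using x outer_hyps(2) outer_prems accI.prems CR2 by fastforce
            next
              fix b' assume "d' = DPair a b'" "dred b b'"
              then show ?thesis using x accI CR2 by fastforce
            qed
          qed
        qed
      qed
    qed
  qed
qed

lemma main:
  "has_type omega T R B d \<sigma> \<Longrightarrow> (\<forall>i<length B. RED (B ! i) (\<theta> i)) \<Longrightarrow> RED \<sigma> (psubst d \<theta>)"
proof (induct arbitrary: \<theta> rule: has_type.induct)
  case (top w B d)
  then show ?case by (simp add: RED_DU)
next
  case (ax i B)
  then show ?case by simp
next
  case (arrI s B d t)
  have "RED (Arr s t) (DLam s (psubst d (up \<theta>)))"
  proof (rule RED_lam, intro allI impI)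
    fix e assume e: "RED s e"
    have "\<forall>i<length (s # B). RED ((s # B) ! i) (scons e \<theta> i)"
      using e arrI.prems by (auto simp: scons_def nth_Cons split: nat.split)
    then have "RED t (psubst d (scons e \<theta>))" using arrI.hyps(2) by blast
    then show "RED t (dsubst (psubst d (up \<theta>)) e 0)" by (simp add: dsubst_psubst_up)
  qed
  then show ?case by simp
next
  case (arrE B d1 s t d2)
  then show ?case by simp
next
  case (interI B d1 s d2 t)
  have "RED (Inter s t) (DPair (psubst d1 \<theta>) (psubst d2 \<theta>))"
    by (rule RED_pair) (use interI in auto)
  then show ?case by simp
next
  case (interE1 B d s t)
  then show ?case by simp
next
  case (interE2 B d s t)
  then show ?case by simp
next
  case (sub B d s t)
  then have "RED s (psubst d \<theta>)" by blast
  then show ?case by (simp add: RED_ann CR1)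
qed

theorem mainTheorem13:
  fixes omega :: "'a option" and T :: "('a ity \<times> 'a ity) set" and R :: rel
    and B :: "'a ity list" and d :: "'a dterm" and \<sigma> :: "'a ity"
  assumes "type_theory T"
    and "has_type omega T R B d \<sigma>"
  shows "\<not> (\<exists>f. f 0 = d \<and> (\<forall>i. dred (f i) (f (Suc i))))"
proof -
  have "RED \<sigma> (psubst d DVar)"
    using main[OF assms(2), of DVar] RED_var by blast
  then have "SN d" by (simp add: psubst_id CR1)
  then show ?thesis by (rule SN_no_chain)
qed

end
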